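(* Let $X$ be a topological space whose frame of open sets has a presentation $\mathcal{O}X=\langle G\mid R\rangle$, with quotient frame homomorphism $\overline{q}\colon\mathcal{O}(\Sigma^G)\to\mathcal{O}X$. Give $\mathcal{O}(\Sigma^G)$ and $\mathcal{O}X$ their Scott topologies, and let $\widetilde{\mathrm{ev}}\colon\mathcal{O}(\Sigma^G)\times X\to\Sigma$ be the continuous map with $\widetilde{\mathrm{ev}}(m,x)=\top$ iff $x\in\overline{q}(m)$. Suppose $\overline{q}$ has a continuous section $s\colon\mathcal{O}X\to\mathcal{O}(\Sigma^G)$ (i.e. $\overline{q}\circ s=\mathrm{id}$). Then $\mathcal{O}X$ with the Scott topology, together with the evaluation map $\widetilde{\mathrm{ev}}\circ(s\times X)$ (which sends $(U,x)$ to $\top$ iff $x\in U$), is the exponential $\Sigma^X$ in the category $\mathrm{Top}$ of topological spaces; in particular $X$ is locally compact (i.e. $\mathcal{O}X$ is a continuous lattice).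
   Context: Frames: complete lattices where finite meets distribute over arbitrary joins. $\Sigma$ is Sierpiński space $\{\bot,\top\}$ with open sets $\emptyset,\{\top\},\{\bot,\top\}$. For a set $G$, $\mathcal{O}(\Sigma^G)$ is the free frame on $G$. A presentation $\mathcal{O}X=\langle G\mid R\rangle$ means the frame of opens of $X$ is the quotient of the free frame on $G$ by the congruence generated by the relations $R$, with quotient map $\overline{q}$; a point $x\in X$ "lies in" $m\in\mathcal{O}(\Sigma^G)$ iff $x\in\overline{q}(m)$. Scott topology: $V$ is open iff it is an upset and whenever the join of a directed set lies in $V$ some member of the set does. The way-below relation: $a\ll b$ iff whenever $b\le\bigvee D$ for directed $D$, $a\le d$ for some $d\in D$; a lattice is continuous if every $b$ is the directed join of $\{a\mid a\ll b\}$. *)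

theory Defs
  imports "HOL-Analysis.Analysis"
begin

definition sierpinski :: "bool topology" where
  "sierpinski = topology (\<lambda>U. U \<in> {{}, {True}, UNIV})"

text \<open>The space Sigma^G (product of copies of Sierpinski space indexed by G);
  its frame of opens is the free frame on G.\<close>
definition sigma_pow :: "'g set \<Rightarrow> ('g \<Rightarrow> bool) topology" where
  "sigma_pow G = product_topology (\<lambda>_. sierpinski) G"

definition opens :: "'a topology \<Rightarrow> 'a set set" where
  "opens T = {U. openin T U}"

definition directed_fam :: "'a set set \<Rightarrow> bool" where
  "directed_fam D \<longleftrightarrow> D \<noteq> {} \<and> (\<forall>a\<in>D. \<forall>b\<in>D. \<exists>c\<in>D. a \<subseteq> c \<and> b \<subseteq> c)"

text \<open>Scott topology on a complete lattice L of sets in which joins are unions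
  (as is the case for a frame of opens).\<close>
definition scott_open :: "'a set set \<Rightarrow> 'a set set \<Rightarrow> bool" where
  "scott_open L V \<longleftrightarrow> V \<subseteq> L \<and> (\<forall>U\<in>V. \<forall>W\<in>L. U \<subseteq> W \<longrightarrow> W \<in> V)
     \<and> (\<forall>D. D \<subseteq> L \<and> directed_fam D \<and> \<Union>D \<in> V \<longrightarrow> (\<exists>d\<in>D. d \<in> V))"

definition scott_topology :: "'a set set \<Rightarrow> 'a set topology" where
  "scott_topology L = topology (scott_open L)"

definition way_below :: "'a set set \<Rightarrow> 'a set \<Rightarrow> 'a set \<Rightarrow> bool" where
  "way_below L a b \<longleftrightarrow> (\<forall>D. D \<subseteq> L \<and> directed_fam D \<and> b \<subseteq> \<Union>D \<longrightarrow> (\<exists>d\<in>D. a \<subseteq> d))"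

definition continuous_lattice :: "'a set set \<Rightarrow> bool" where
  "continuous_lattice L \<longleftrightarrow> (\<forall>b\<in>L. directed_fam {a\<in>L. way_below L a b}
      \<and> b = \<Union>{a\<in>L. way_below L a b})"

definition frame_hom :: "'a topology \<Rightarrow> 'b topology \<Rightarrow> ('a set \<Rightarrow> 'b set) \<Rightarrow> bool" where
  "frame_hom T S h \<longleftrightarrow> (\<forall>U. openin T U \<longrightarrow> openin S (h U))
     \<and> h (topspace T) = topspace S
     \<and> (\<forall>U V. openin T U \<longrightarrow> openin T V \<longrightarrow> h (U \<inter> V) = h U \<inter> h V)
     \<and> (\<forall>\<U>. (\<forall>U\<in>\<U>. openin T U) \<longrightarrow> h (\<Union>\<U>) = \<Union>(h ` \<U>))"

definition frame_congruence :: "'a topology \<Rightarrow> ('a set \<times> 'a set) set \<Rightarrow> bool" where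
  "frame_congruence T \<theta> \<longleftrightarrow> equiv (opens T) \<theta>
     \<and> (\<forall>U U' V V'. (U, U') \<in> \<theta> \<longrightarrow> (V, V') \<in> \<theta> \<longrightarrow> (U \<inter> V, U' \<inter> V') \<in> \<theta>)
     \<and> (\<forall>P. P \<subseteq> \<theta> \<longrightarrow> (\<Union>(fst ` P), \<Union>(snd ` P)) \<in> \<theta>)"

definition congruence_generated :: "'a topology \<Rightarrow> ('a set \<times> 'a set) set \<Rightarrow> ('a set \<times> 'a set) set" where
  "congruence_generated T R = \<Inter>{\<theta>. frame_congruence T \<theta> \<and> R \<subseteq> \<theta>}"

definition is_presentation ::
  "'x topology \<Rightarrow> 'g set \<Rightarrow> (('g \<Rightarrow> bool) set \<times> ('g \<Rightarrow> bool) set) set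
     \<Rightarrow> (('g \<Rightarrow> bool) set \<Rightarrow> 'x set) \<Rightarrow> bool" where
  "is_presentation X G R q \<longleftrightarrow>
     R \<subseteq> opens (sigma_pow G) \<times> opens (sigma_pow G)
     \<and> frame_hom (sigma_pow G) X q
     \<and> q ` opens (sigma_pow G) = opens X
     \<and> {(U, V). U \<in> opens (sigma_pow G) \<and> V \<in> opens (sigma_pow G) \<and> q U = q V}
         = congruence_generated (sigma_pow G) R"

end

theory Submission
  imports Defs
begin

lemma scott_sub: "scott_open L V \<Longrightarrow> V \<subseteq> L"
  unfolding scott_open_def by blast

lemma scott_up: "scott_open L V \<Longrightarrow> U \<in> V \<Longrightarrow> W \<in> L \<Longrightarrow> U \<subseteq> W \<Longrightarrow> W \<in> V"
  unfolding scott_open_def by blast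

lemma scott_dir: "scott_open L V \<Longrightarrow> D \<subseteq> L \<Longrightarrow> directed_fam D \<Longrightarrow> \<Union>D \<in> V \<Longrightarrow> \<exists>d\<in>D. d \<in> V"
  unfolding scott_open_def by blast

lemma scott_openI:
  assumes "V \<subseteq> L" "\<And>U W. U \<in> V \<Longrightarrow> W \<in> L \<Longrightarrow> U \<subseteq> W \<Longrightarrow> W \<in> V"
    "\<And>D. D \<subseteq> L \<Longrightarrow> directed_fam D \<Longrightarrow> \<Union>D \<in> V \<Longrightarrow> \<exists>d\<in>D. d \<in> V"
  shows "scott_open L V"
  unfolding scott_open_def using assms by blast

lemma istop_scott: "istopology (scott_open L)"
  unfolding istopology_def
proof (intro conjI allI impI)
  fix S T assume S: "scott_open L S" and T: "scott_open L T"
  show "scott_open L (S \<inter> T)"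
  proof (rule scott_openI)
    show "S \<inter> T \<subseteq> L" using scott_sub[OF S] by blast
  next
    fix U W assume "U \<in> S \<inter> T" "W \<in> L" "U \<subseteq> W"
    then show "W \<in> S \<inter> T" using scott_up[OF S] scott_up[OF T] by blast
  next
    fix D assume D: "D \<subseteq> L" "directed_fam D" "\<Union>D \<in> S \<inter> T"
    then obtain d1 d2 where d: "d1 \<in> D" "d1 \<in> S" "d2 \<in> D" "d2 \<in> T"
      using scott_dir[OF S D(1,2)] scott_dir[OF T D(1,2)] by blast
    then obtain c where c: "c \<in> D" "d1 \<subseteq> c" "d2 \<subseteq> c" using D(2) unfolding directed_fam_def by blast
    have "c \<in> L" using c D by blast
    then have "c \<in> S" "c \<in> T" using scott_up[OF S d(2)] scott_up[OF T d(4)] c by blast+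
    then show "\<exists>d\<in>D. d \<in> S \<inter> T" using c by blast
  qed
next
  fix K assume K: "\<forall>K\<in>K. scott_open L K"
  show "scott_open L (\<Union>K)"
  proof (rule scott_openI)
    show "\<Union>K \<subseteq> L" using K scott_sub by blast
  next
    fix U W assume "U \<in> \<Union>K" "W \<in> L" "U \<subseteq> W"
    then show "W \<in> \<Union>K" using K scott_up by blast
  next
    fix D assume D: "D \<subseteq> L" "directed_fam D" "\<Union>D \<in> \<Union>K"
    then obtain S where "S \<in> K" "\<Union>D \<in> S" by blast
    then show "\<exists>d\<in>D. d \<in> \<Union>K" using K D scott_dir by blast
  qed
qed

lemma openin_scott: "openin (scott_topology L) V \<longleftrightarrow> scott_open L V"
  unfolding scott_topology_def by (simp only: topology_inverse'[OF istop_scott])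

lemma scott_open_L: "scott_open L L"
  by (auto simp: scott_open_def directed_fam_def)

lemma topspace_scott: "topspace (scott_topology L) = L"
proof -
  have "\<And>V. scott_open L V \<Longrightarrow> V \<subseteq> L" unfolding scott_open_def by blast
  then show ?thesis unfolding topspace_def openin_scott using scott_open_L by blast
qed

lemma directed_finite:
  assumes dir: "directed_fam D" and fin: "finite F"
  shows "F \<subseteq> D \<Longrightarrow> \<exists>d\<in>D. \<Union>F \<subseteq> d"
  using fin
proof (induction F rule: finite_induct)
  case empty
  from dir have "D \<noteq> {}" unfolding directed_fam_def by simp
  then obtain d where "d \<in> D" by auto
  then show ?case by auto
next
  case (insert x F)
  then have "F \<subseteq> D" "x \<in> D" by auto
  then obtain d where d: "d \<in> D" "\<Union>F \<subseteq> d" using insert.IH by auto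
  from dir have "\<forall>a\<in>D. \<forall>b\<in>D. \<exists>c\<in>D. a \<subseteq> c \<and> b \<subseteq> c" unfolding directed_fam_def by simp
  then obtain c where c: "c \<in> D" "x \<subseteq> c" "d \<subseteq> c" using d(1) \<open>x \<in> D\<close> by meson
  have "\<Union>(insert x F) \<subseteq> c" using c(2,3) d(2) by auto
  then show ?case using c(1) by (intro impI bexI)
qed

lemma scott_open_up_compact:
  assumes "compactin T K"
  shows "scott_open (opens T) {W \<in> opens T. K \<subseteq> W}"
proof (rule scott_openI)
  fix D assume D: "D \<subseteq> opens T" "directed_fam D" "\<Union>D \<in> {W \<in> opens T. K \<subseteq> W}"
  have o: "\<forall>U\<in>D. openin T U" using D(1) unfolding opens_def by auto
  have k: "K \<subseteq> \<Union>D" using D(3) by simp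
  have "\<forall>\<U>. (\<forall>U \<in> \<U>. openin T U) \<and> K \<subseteq> \<Union>\<U> \<longrightarrow> (\<exists>\<F>. finite \<F> \<and> \<F> \<subseteq> \<U> \<and> K \<subseteq> \<Union>\<F>)"
    using assms unfolding compactin_def by (rule conjunct2)
  then have "\<exists>\<F>. finite \<F> \<and> \<F> \<subseteq> D \<and> K \<subseteq> \<Union>\<F>" using o k by (elim allE impE) (intro conjI)
  then obtain F where F: "finite F" "F \<subseteq> D" "K \<subseteq> \<Union>F" by (elim exE conjE)
  obtain d where d: "d \<in> D" "\<Union>F \<subseteq> d" using directed_finite[OF D(2) F(1) F(2)] by (elim bexE)
  have "d \<in> opens T" using d(1) D(1) by (rule subsetD[rotated])
  moreover have "K \<subseteq> d" using F(3) d(2) by (rule subset_trans)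
  ultimately show "\<exists>d\<in>D. d \<in> {W \<in> opens T. K \<subseteq> W}" using d(1) by blast
qed auto

lemma sierpinski_open: "openin sierpinski U \<longleftrightarrow> U \<in> {{}, {True}, UNIV}"
proof -
  have "istopology (\<lambda>U. U \<in> {{}, {True}, UNIV})"
    unfolding istopology_def
  proof (intro conjI allI impI)
    fix K :: "bool set set" assume "\<forall>K\<in>K. K \<in> {{}, {True}, UNIV}"
    then have sub: "\<And>A. A \<in> K \<Longrightarrow> A = {} \<or> A = {True} \<or> A = UNIV" by blast
    show "\<Union>K \<in> {{}, {True}, UNIV}"
    proof (cases "UNIV \<in> K")
      case True then have "\<Union>K = UNIV" by blast
      then show ?thesis by simp
    next
      case F1: False
      show ?thesis
      proof (cases "{True} \<in> K")
        case True
        then have "\<Union>K = {True}" using F1 sub by blast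
        then show ?thesis by simp
      next
        case False
        then have "\<Union>K = {}" using F1 sub by blast
        then show ?thesis by simp
      qed
    qed
  qed auto
  then show ?thesis unfolding sierpinski_def by simp
qed

lemma topspace_sierpinski: "topspace sierpinski = UNIV"
proof -
  have "openin sierpinski UNIV" by (simp add: sierpinski_open)
  then have "UNIV \<subseteq> topspace sierpinski" by (rule openin_subset)
  then show ?thesis by blast
qed

lemma continuous_to_sierpinski:
  "continuous_map T sierpinski f \<longleftrightarrow> openin T {x \<in> topspace T. f x}"
proof -
  have A: "openin T {x \<in> topspace T. f x \<in> U}" if "U \<in> {{}, {True}, UNIV}" "openin T {x \<in> topspace T. f x}" for U
    using that by auto
  have B: "{x \<in> topspace T. f x \<in> {True}} = {x \<in> topspace T. f x}" by auto
  show ?thesis unfolding continuous_map_def sierpinski_open topspace_sierpinski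
  proof
    assume "f \<in> topspace T \<rightarrow> UNIV \<and> (\<forall>U. U \<in> {{}, {True}, UNIV} \<longrightarrow> openin T {x \<in> topspace T. f x \<in> U})"
    then have "openin T {x \<in> topspace T. f x \<in> {True}}" by blast
    then show "openin T {x \<in> topspace T. f x}" using B by simp
  qed (use A in auto)
qed

lemma sigma_loc:
  assumes "openin (sigma_pow G) Om" "p \<in> Om"
  shows "\<exists>K. compactin (sigma_pow G) K \<and> openin (sigma_pow G) K \<and> p \<in> K \<and> K \<subseteq> Om"
proof -
  obtain U where U: "finite {i \<in> G. U i \<noteq> topspace sierpinski}" "\<forall>i\<in>G. openin sierpinski (U i)"
    "p \<in> Pi\<^sub>E G U" "Pi\<^sub>E G U \<subseteq> Om"
    using assms unfolding sigma_pow_def openin_product_topology_alt by blast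
  have "openin (sigma_pow G) (Pi\<^sub>E G U)" unfolding sigma_pow_def openin_PiE_gen using U by blast
  moreover have "compactin (sigma_pow G) (Pi\<^sub>E G U)" unfolding sigma_pow_def compactin_PiE
    by (simp add: finite_imp_compactin topspace_sierpinski)
  ultimately show ?thesis using U(3,4) by blast
qed

lemma pres_facts:
  assumes "is_presentation X G R q"
  shows q_open: "\<And>U. openin (sigma_pow G) U \<Longrightarrow> openin X (q U)"
    and q_inter: "\<And>U V. openin (sigma_pow G) U \<Longrightarrow> openin (sigma_pow G) V \<Longrightarrow> q (U \<inter> V) = q U \<inter> q V"
    and q_union: "\<And>\<U>. (\<forall>U\<in>\<U>. openin (sigma_pow G) U) \<Longrightarrow> q (\<Union>\<U>) = \<Union>(q ` \<U>)"
proof -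
  have fh: "frame_hom (sigma_pow G) X q" using assms unfolding is_presentation_def by (elim conjE)
  note fh' = fh[unfolded frame_hom_def]
  note f1 = fh'[THEN conjunct1]
  note f3 = fh'[THEN conjunct2, THEN conjunct2, THEN conjunct1]
  note f4 = fh'[THEN conjunct2, THEN conjunct2, THEN conjunct2]
  show "\<And>U. openin (sigma_pow G) U \<Longrightarrow> openin X (q U)" using f1 by simp
  show "\<And>U V. openin (sigma_pow G) U \<Longrightarrow> openin (sigma_pow G) V \<Longrightarrow> q (U \<inter> V) = q U \<inter> q V"
    using f3 by simp
  show "\<And>\<U>. (\<forall>U\<in>\<U>. openin (sigma_pow G) U) \<Longrightarrow> q (\<Union>\<U>) = \<Union>(q ` \<U>)"
    using f4 by simp
qed

lemma q_mono:
  assumes "is_presentation X G R q" "openin (sigma_pow G) K" "openin (sigma_pow G) W" "K \<subseteq> W"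
  shows "q K \<subseteq> q W"
proof -
  have "q K = q (K \<inter> W)" using assms(4) by (simp add: Int_absorb2)
  also have "\<dots> = q K \<inter> q W" using q_inter[OF assms(1) assms(2,3)] .
  finally show ?thesis by blast
qed

lemma s_facts:
  assumes s_cont: "continuous_map (scott_topology (opens X)) (scott_topology (opens (sigma_pow G))) s"
  shows s_open: "\<And>U. U \<in> opens X \<Longrightarrow> s U \<in> opens (sigma_pow G)"
    and s_pre: "\<And>W. scott_open (opens (sigma_pow G)) W \<Longrightarrow> scott_open (opens X) {U \<in> opens X. s U \<in> W}"
proof -
  fix U assume "U \<in> opens X"
  then show "s U \<in> opens (sigma_pow G)" using s_cont unfolding continuous_map_def topspace_scott by blast
next
  fix W assume "scott_open (opens (sigma_pow G)) W"
  then have "openin (scott_topology (opens (sigma_pow G))) W" by (simp add: openin_scott)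
  then have "openin (scott_topology (opens X)) {U \<in> topspace (scott_topology (opens X)). s U \<in> W}"
    using s_cont unfolding continuous_map_def by blast
  then show "scott_open (opens X) {U \<in> opens X. s U \<in> W}" by (simp add: openin_scott topspace_scott)
qed

lemma key2:
  assumes pres: "is_presentation X G R q"
    and s_cont: "continuous_map (scott_topology (opens X)) (scott_topology (opens (sigma_pow G))) s"
    and s_sect: "\<forall>U\<in>opens X. q (s U) = U"
    and V: "scott_open (opens X) V" and b: "b \<in> V"
  shows "\<exists>a V'. a \<in> opens X \<and> a \<in> V \<and> scott_open (opens X) V' \<and> b \<in> V' \<and> (\<forall>U\<in>V'. a \<subseteq> U)"
proof -
  define S where "S = sigma_pow G"
  have bo: "b \<in> opens X" using scott_sub[OF V] b by blast
  define O' where "O' = s b"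
  have Oo: "openin S O'" using s_open[OF s_cont bo] unfolding O'_def S_def opens_def by simp
  define KK where "KK = {K. compactin S K \<and> openin S K \<and> K \<subseteq> O'}"
  define D where "D = q ` KK"
  have KKo: "\<forall>K\<in>KK. openin S K" unfolding KK_def by blast
  have Dsub: "D \<subseteq> opens X" unfolding D_def opens_def using q_open[OF pres] KKo unfolding S_def by blast
  have "{} \<in> KK" unfolding KK_def by simp
  then have Dne: "D \<noteq> {}" unfolding D_def by blast
  have "\<exists>c\<in>D. a \<subseteq> c \<and> a' \<subseteq> c" if aD: "a \<in> D" "a' \<in> D" for a a'
  proof -
    obtain K1 where K1: "K1 \<in> KK" "a = q K1" using aD(1) unfolding D_def by blast
    obtain K2 where K2: "K2 \<in> KK" "a' = q K2" using aD(2) unfolding D_def by blast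
    note K = K1(1) K2(1) K1(2) K2(2)
    have U: "K1 \<union> K2 \<in> KK" using K(1,2) unfolding KK_def by (auto intro: compactin_Un)
    have o1: "openin S K1" "openin S K2" "openin S (K1 \<union> K2)" using K(1,2) U KKo by blast+
    have "q K1 \<subseteq> q (K1 \<union> K2)" using q_mono[OF pres o1(1)[unfolded S_def] o1(3)[unfolded S_def]] by blast
    moreover have "q K2 \<subseteq> q (K1 \<union> K2)" using q_mono[OF pres o1(2)[unfolded S_def] o1(3)[unfolded S_def]] by blast
    ultimately have "q K1 \<subseteq> q (K1 \<union> K2) \<and> q K2 \<subseteq> q (K1 \<union> K2)" by blast
    then show ?thesis using U K unfolding D_def by blast
  qed
  then have Ddir: "directed_fam D" unfolding directed_fam_def using Dne by blast
  have "O' = \<Union>KK"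
  proof
    show "O' \<subseteq> \<Union>KK"
    proof
      fix p assume "p \<in> O'"
      then obtain K where "compactin S K" "openin S K" "p \<in> K" "K \<subseteq> O'"
        using sigma_loc[of G O' p] Oo unfolding S_def by blast
      then show "p \<in> \<Union>KK" unfolding KK_def by blast
    qed
  qed (auto simp: KK_def)
  then have "q O' = \<Union>D" unfolding D_def using q_union[OF pres] KKo unfolding S_def by simp
  moreover have "q O' = b" using s_sect bo unfolding O'_def by blast
  ultimately have "\<Union>D \<in> V" using b by simp
  then obtain a where a: "a \<in> D" "a \<in> V" using scott_dir[OF V Dsub Ddir] by blast
  then obtain K where K: "K \<in> KK" "a = q K" unfolding D_def by blast
  define V' where "V' = {U \<in> opens X. s U \<in> {W \<in> opens S. K \<subseteq> W}}"
  have "compactin S K" using K unfolding KK_def by blast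
  then have V'o: "scott_open (opens X) V'" unfolding V'_def S_def
    using s_pre[OF s_cont] scott_open_up_compact by blast
  have "b \<in> V'" unfolding V'_def using bo K(1) Oo unfolding KK_def O'_def opens_def by blast
  moreover have "\<forall>U\<in>V'. a \<subseteq> U"
  proof
    fix U assume "U \<in> V'"
    then have U: "U \<in> opens X" "s U \<in> opens S" "K \<subseteq> s U" unfolding V'_def by auto
    have "q K \<subseteq> q (s U)" using q_mono[OF pres] K(1) KKo U unfolding S_def opens_def by blast
    then show "a \<subseteq> U" using s_sect U K(2) by simp
  qed
  ultimately show ?thesis using a Dsub V'o by blast
qed

lemma point_scott: "scott_open (opens X) {U \<in> opens X. x \<in> U}"
proof (rule scott_openI)
  fix D assume D: "D \<subseteq> opens X" "directed_fam D" "\<Union>D \<in> {U \<in> opens X. x \<in> U}"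
  then obtain d where "d \<in> D" "x \<in> d" by blast
  then show "\<exists>d\<in>D. d \<in> {U \<in> opens X. x \<in> U}" using D(1) by blast
qed auto

lemma ev_cont:
  assumes pres: "is_presentation X G R q"
    and s_cont: "continuous_map (scott_topology (opens X)) (scott_topology (opens (sigma_pow G))) s"
    and s_sect: "\<forall>U\<in>opens X. q (s U) = U"
  shows "continuous_map (prod_topology (scott_topology (opens X)) X) sierpinski (\<lambda>(U, x). x \<in> q (s U))"
  unfolding continuous_to_sierpinski
proof (subst openin_subopen, intro ballI)
  fix z assume z: "z \<in> {z \<in> topspace (prod_topology (scott_topology (opens X)) X). case z of (U, x) \<Rightarrow> x \<in> q (s U)}"
  obtain b x where bx: "z = (b, x)" by (cases z)
  have b: "b \<in> opens X" "x \<in> topspace X" "x \<in> q (s b)" using z bx by (auto simp: topspace_scott)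
  then have xb: "x \<in> b" using s_sect by simp
  have "b \<in> {U \<in> opens X. x \<in> U}" using b(1) xb by blast
  then obtain a V' where aV: "a \<in> opens X" "a \<in> {U \<in> opens X. x \<in> U}" "scott_open (opens X) V'" "b \<in> V'"
     "\<forall>U\<in>V'. a \<subseteq> U"
    using key2[OF pres s_cont s_sect point_scott] by blast
  have "openin (prod_topology (scott_topology (opens X)) X) (V' \<times> a)"
    using aV(1,3) by (simp add: openin_prod_Times_iff openin_scott opens_def)
  moreover have "z \<in> V' \<times> a" using bx aV(2,4) by blast
  moreover have "V' \<times> a \<subseteq> {z \<in> topspace (prod_topology (scott_topology (opens X)) X). case z of (U, x) \<Rightarrow> x \<in> q (s U)}"
  proof
    fix w assume w: "w \<in> V' \<times> a"
    obtain U y where Uy: "w = (U, y)" by (cases w)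
    have U: "U \<in> opens X" "y \<in> U" using w Uy aV(3,5) scott_sub by blast+
    then have "y \<in> topspace X" unfolding opens_def using openin_subset by blast
    moreover have "y \<in> q (s U)" using U s_sect by simp
    ultimately show "w \<in> {z \<in> topspace (prod_topology (scott_topology (opens X)) X). case z of (U, x) \<Rightarrow> x \<in> q (s U)}"
      using U(1) Uy by (simp add: topspace_scott)
  qed
  ultimately show "\<exists>T. openin (prod_topology (scott_topology (opens X)) X) T \<and> z \<in> T \<and>
      T \<subseteq> {z \<in> topspace (prod_topology (scott_topology (opens X)) X). case z of (U, x) \<Rightarrow> x \<in> q (s U)}"
    by blast
qed

lemma slice_open:
  assumes f: "continuous_map (prod_topology Y X) sierpinski f" and y: "y \<in> topspace Y"
  shows "openin X {x \<in> topspace X. f (y, x)}"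
proof -
  have "continuous_map X (prod_topology Y X) (\<lambda>x. (y, x))"
    using y by (intro continuous_map_pairedI) auto
  then have "continuous_map X sierpinski (f \<circ> (\<lambda>x. (y, x)))"
    using f by (rule continuous_map_compose)
  then show ?thesis unfolding continuous_to_sierpinski by simp
qed

lemma h_cont:
  assumes pres: "is_presentation X G R q"
    and s_cont: "continuous_map (scott_topology (opens X)) (scott_topology (opens (sigma_pow G))) s"
    and s_sect: "\<forall>U\<in>opens X. q (s U) = U"
    and f: "continuous_map (prod_topology Y X) sierpinski f"
  shows "continuous_map Y (scott_topology (opens X)) (\<lambda>y. {x \<in> topspace X. f (y, x)})"
proof -
  define h where "h = (\<lambda>y. {x \<in> topspace X. f (y, x)})"
  have hopen: "h y \<in> opens X" if "y \<in> topspace Y" for y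
    using slice_open[OF f that] unfolding h_def opens_def by simp
  define F where "F = {z \<in> topspace (prod_topology Y X). f z}"
  have Fo: "openin (prod_topology Y X) F" using f unfolding F_def continuous_to_sierpinski .
  define I where "I = (\<lambda>N. \<Union>{B. openin X B \<and> N \<times> B \<subseteq> F})"
  have Io: "openin X (I N)" for N unfolding I_def by (rule openin_Union) blast
  have Imono: "I N' \<subseteq> I N" if "N \<subseteq> N'" for N N'
    unfolding I_def using that by blast
  have "openin Y {y \<in> topspace Y. h y \<in> V}" if V: "scott_open (opens X) V" for V
  proof (subst openin_subopen, intro ballI)
    fix y0 assume y0: "y0 \<in> {y \<in> topspace Y. h y \<in> V}"
    obtain a V' where aV: "a \<in> opens X" "a \<in> V" "scott_open (opens X) V'" "h y0 \<in> V'"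
       "\<forall>U\<in>V'. a \<subseteq> U"
      using key2[OF pres s_cont s_sect V, of "h y0"] y0 by blast
    define NN where "NN = {N. openin Y N \<and> y0 \<in> N}"
    define D where "D = I ` NN"
    have Dsub: "D \<subseteq> opens X" unfolding D_def opens_def using Io by blast
    have "topspace Y \<in> NN" using y0 unfolding NN_def by simp
    then have Dne: "D \<noteq> {}" unfolding D_def by blast
    have "\<exists>c\<in>D. d1 \<subseteq> c \<and> d2 \<subseteq> c" if d: "d1 \<in> D" "d2 \<in> D" for d1 d2
    proof -
      obtain N1 where N1: "N1 \<in> NN" "d1 = I N1" using d(1) unfolding D_def by blast
      obtain N2 where N2: "N2 \<in> NN" "d2 = I N2" using d(2) unfolding D_def by blast
      have "N1 \<inter> N2 \<in> NN" using N1(1) N2(1) unfolding NN_def by auto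
      moreover have "I N1 \<subseteq> I (N1 \<inter> N2)" "I N2 \<subseteq> I (N1 \<inter> N2)" using Imono by blast+
      ultimately show ?thesis using N1(2) N2(2) unfolding D_def by blast
    qed
    then have Ddir: "directed_fam D" unfolding directed_fam_def using Dne by blast
    have "\<Union>D = h y0"
    proof
      show "\<Union>D \<subseteq> h y0"
      proof
        fix x assume "x \<in> \<Union>D"
        then obtain N B where "N \<in> NN" "openin X B" "N \<times> B \<subseteq> F" "x \<in> B"
          unfolding D_def I_def by blast
        then have "(y0, x) \<in> F" unfolding NN_def by blast
        then show "x \<in> h y0" unfolding F_def h_def by simp
      qed
    next
      show "h y0 \<subseteq> \<Union>D"
      proof
        fix x assume "x \<in> h y0"
        then have "(y0, x) \<in> F" using y0 unfolding F_def h_def by simp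
        moreover have "\<forall>x y. (x,y) \<in> F \<longrightarrow> (\<exists>U V. openin Y U \<and> openin X V \<and> x \<in> U \<and> y \<in> V \<and> U \<times> V \<subseteq> F)"
          using Fo by (simp only: openin_prod_topology_alt)
        ultimately have "\<exists>U V. openin Y U \<and> openin X V \<and> y0 \<in> U \<and> x \<in> V \<and> U \<times> V \<subseteq> F"
          by (elim allE impE)
        then obtain N B where NB: "openin Y N" "openin X B" "y0 \<in> N" "x \<in> B" "N \<times> B \<subseteq> F"
          by (elim exE conjE)
        then have "x \<in> I N" "N \<in> NN" unfolding I_def NN_def by blast+
        then show "x \<in> \<Union>D" unfolding D_def by blast
      qed
    qed
    then have "\<Union>D \<in> V'" using aV(4) by simp
    then obtain d where "d \<in> D" "d \<in> V'" using scott_dir[OF aV(3) Dsub Ddir] by blast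
    then obtain N where N: "N \<in> NN" "I N \<in> V'" unfolding D_def by blast
    have aI: "a \<subseteq> I N" using N(2) aV(5) by blast
    have "N \<subseteq> {y \<in> topspace Y. h y \<in> V}"
    proof
      fix y assume y: "y \<in> N"
      then have yt: "y \<in> topspace Y" using N(1) openin_subset unfolding NN_def by blast
      have "I N \<subseteq> h y"
      proof
        fix x assume "x \<in> I N"
        then obtain B where "N \<times> B \<subseteq> F" "x \<in> B" unfolding I_def by blast
        then have "(y, x) \<in> F" using y by blast
        then show "x \<in> h y" unfolding F_def h_def by simp
      qed
      then have "h y \<in> V" using scott_up[OF V aV(2) hopen[OF yt]] aI by blast
      then show "y \<in> {y \<in> topspace Y. h y \<in> V}" using yt by blast
    qed
    then show "\<exists>T. openin Y T \<and> y0 \<in> T \<and> T \<subseteq> {y \<in> topspace Y. h y \<in> V}"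
      using N(1) unfolding NN_def by blast
  qed
  then show ?thesis unfolding h_def[symmetric] continuous_map_def topspace_scott openin_scott
    using hopen by blast
qed

lemma wb_le:
  assumes "way_below L a b" "b \<in> L"
  shows "a \<subseteq> b"
proof -
  have "directed_fam {b}" unfolding directed_fam_def by blast
  then show ?thesis using assms unfolding way_below_def by blast
qed

lemma wb_from:
  assumes "scott_open (opens X) V'" "b \<in> V'" "\<forall>U\<in>V'. a \<subseteq> U"
  shows "way_below (opens X) a b"
  unfolding way_below_def
proof (intro allI impI)
  fix D assume D: "D \<subseteq> opens X \<and> directed_fam D \<and> b \<subseteq> \<Union>D"
  have "openin X (\<Union>D)" using D unfolding opens_def by (intro openin_Union) blast
  then have "\<Union>D \<in> opens X" unfolding opens_def by simp
  then have "\<Union>D \<in> V'" using scott_up[OF assms(1,2)] D by blast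
  then obtain d where "d \<in> D" "d \<in> V'" using scott_dir[OF assms(1)] D by blast
  then show "\<exists>d\<in>D. a \<subseteq> d" using assms(3) by blast
qed

lemma wb_empty: "way_below L {} b"
  unfolding way_below_def directed_fam_def by auto

lemma wb_un:
  assumes "way_below L a1 b" "way_below L a2 b"
  shows "way_below L (a1 \<union> a2) b"
  unfolding way_below_def
proof (intro allI impI)
  fix D assume D: "D \<subseteq> L \<and> directed_fam D \<and> b \<subseteq> \<Union>D"
  obtain d1 where d1: "d1 \<in> D" "a1 \<subseteq> d1" using assms(1) D unfolding way_below_def by blast
  obtain d2 where d2: "d2 \<in> D" "a2 \<subseteq> d2" using assms(2) D unfolding way_below_def by blast
  have "\<forall>a\<in>D. \<forall>b\<in>D. \<exists>c\<in>D. a \<subseteq> c \<and> b \<subseteq> c" using D unfolding directed_fam_def by blast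
  then obtain c where "c \<in> D" "d1 \<subseteq> c" "d2 \<subseteq> c" using d1(1) d2(1) by meson
  then show "\<exists>d\<in>D. a1 \<union> a2 \<subseteq> d" using d1(2) d2(2) by blast
qed

lemma cont_lat:
  assumes pres: "is_presentation X G R q"
    and s_cont: "continuous_map (scott_topology (opens X)) (scott_topology (opens (sigma_pow G))) s"
    and s_sect: "\<forall>U\<in>opens X. q (s U) = U"
  shows "continuous_lattice (opens X)"
  unfolding continuous_lattice_def
proof (intro ballI conjI)
  fix b assume b: "b \<in> opens X"
  define W where "W = {a \<in> opens X. way_below (opens X) a b}"
  have "{} \<in> W" unfolding W_def opens_def by (simp add: wb_empty)
  moreover have "\<exists>c\<in>W. a1 \<subseteq> c \<and> a2 \<subseteq> c" if "a1 \<in> W" "a2 \<in> W" for a1 a2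
  proof -
    have "a1 \<union> a2 \<in> W" using that unfolding W_def opens_def by (auto intro: wb_un)
    then show ?thesis by blast
  qed
  ultimately show "directed_fam W" unfolding directed_fam_def by blast
  show "b = \<Union>W"
  proof
    show "\<Union>W \<subseteq> b" using wb_le b unfolding W_def by blast
    show "b \<subseteq> \<Union>W"
    proof
      fix x assume x: "x \<in> b"
      have "b \<in> {U \<in> opens X. x \<in> U}" using b x by blast
      then obtain a V' where aV: "a \<in> opens X" "a \<in> {U \<in> opens X. x \<in> U}" "scott_open (opens X) V'" "b \<in> V'"
         "\<forall>U\<in>V'. a \<subseteq> U"
        using key2[OF pres s_cont s_sect point_scott] by blast
      have "a \<in> W" using wb_from[OF aV(3,4,5)] aV(1) unfolding W_def by blast
      then show "x \<in> \<Union>W" using aV(2) by blast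
    qed
  qed
qed

theorem proposition3p5:
  fixes X :: "'x topology" and G :: "'g set"
    and R :: "(('g \<Rightarrow> bool) set \<times> ('g \<Rightarrow> bool) set) set"
    and q :: "('g \<Rightarrow> bool) set \<Rightarrow> 'x set"
    and s :: "'x set \<Rightarrow> ('g \<Rightarrow> bool) set"
  assumes pres: "is_presentation X G R q"
    and s_cont: "continuous_map (scott_topology (opens X)) (scott_topology (opens (sigma_pow G))) s"
    and s_sect: "\<forall>U\<in>opens X. q (s U) = U"
  shows "(let E = scott_topology (opens X);
              ev = (\<lambda>(U, x). x \<in> q (s U))
          in continuous_map (prod_topology E X) sierpinski ev
             \<and> (\<forall>U\<in>opens X. \<forall>x\<in>topspace X. ev (U, x) \<longleftrightarrow> x \<in> U)
             \<and> (\<forall>(Y :: 'y topology) f. continuous_map (prod_topology Y X) sierpinski f \<longrightarrow>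
                  (\<exists>h. continuous_map Y E h
                       \<and> (\<forall>y\<in>topspace Y. \<forall>x\<in>topspace X. ev (h y, x) = f (y, x))
                       \<and> (\<forall>h'. continuous_map Y E h'
                              \<and> (\<forall>y\<in>topspace Y. \<forall>x\<in>topspace X. ev (h' y, x) = f (y, x))
                              \<longrightarrow> (\<forall>y\<in>topspace Y. h' y = h y)))))
         \<and> continuous_lattice (opens X)"
  unfolding Let_def
proof (intro conjI allI impI ballI)
  show "continuous_map (prod_topology (scott_topology (opens X)) X) sierpinski (\<lambda>(U, x). x \<in> q (s U))"
    by (rule ev_cont[OF pres s_cont s_sect])
  show "continuous_lattice (opens X)" by (rule cont_lat[OF pres s_cont s_sect])
next
  fix U x assume "U \<in> opens X" "x \<in> topspace X"
  then show "(case (U, x) of (U, x) \<Rightarrow> x \<in> q (s U)) = (x \<in> U)" using s_sect by simp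
next
  fix Y :: "'y topology" and f assume f: "continuous_map (prod_topology Y X) sierpinski f"
  define h where "h = (\<lambda>y. {x \<in> topspace X. f (y, x)})"
  have hc: "continuous_map Y (scott_topology (opens X)) h"
    unfolding h_def by (rule h_cont[OF pres s_cont s_sect f])
  have hopen: "h y \<in> opens X" if "y \<in> topspace Y" for y
    using slice_open[OF f that] unfolding h_def opens_def by simp
  have hev: "\<forall>y\<in>topspace Y. \<forall>x\<in>topspace X. (case (h y, x) of (U, x) \<Rightarrow> x \<in> q (s U)) = f (y, x)"
  proof (intro ballI)
    fix y x assume "y \<in> topspace Y" "x \<in> topspace X"
    then show "(case (h y, x) of (U, x) \<Rightarrow> x \<in> q (s U)) = f (y, x)"
      using hopen s_sect unfolding h_def by simp
  qed
  have uniq: "\<forall>h'. continuous_map Y (scott_topology (opens X)) h' \<and>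
      (\<forall>y\<in>topspace Y. \<forall>x\<in>topspace X. (case (h' y, x) of (U, x) \<Rightarrow> x \<in> q (s U)) = f (y, x))
      \<longrightarrow> (\<forall>y\<in>topspace Y. h' y = h y)"
  proof (intro allI impI ballI)
    fix h' y assume H: "continuous_map Y (scott_topology (opens X)) h' \<and>
      (\<forall>y\<in>topspace Y. \<forall>x\<in>topspace X. (case (h' y, x) of (U, x) \<Rightarrow> x \<in> q (s U)) = f (y, x))"
      and y: "y \<in> topspace Y"
    have h'o: "h' y \<in> opens X" using H y unfolding continuous_map_def topspace_scott by blast
    then have sub: "h' y \<subseteq> topspace X" unfolding opens_def using openin_subset by blast
    have qs: "q (s (h' y)) = h' y" using h'o s_sect by blast
    have "\<forall>x\<in>topspace X. (x \<in> q (s (h' y))) = f (y, x)" using H y by simp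
    then have "\<forall>x\<in>topspace X. (x \<in> h' y) = f (y, x)" unfolding qs .
    then show "h' y = h y" using sub unfolding h_def by blast
  qed
  show "\<exists>h. continuous_map Y (scott_topology (opens X)) h \<and>
      (\<forall>y\<in>topspace Y. \<forall>x\<in>topspace X. (case (h y, x) of (U, x) \<Rightarrow> x \<in> q (s U)) = f (y, x)) \<and>
      (\<forall>h'. continuous_map Y (scott_topology (opens X)) h' \<and>
         (\<forall>y\<in>topspace Y. \<forall>x\<in>topspace X. (case (h' y, x) of (U, x) \<Rightarrow> x \<in> q (s U)) = f (y, x))
         \<longrightarrow> (\<forall>y\<in>topspace Y. h' y = h y))"
    using hc hev uniq by blast
qed

end
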